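(* Let $(X,d)$ be a quasi-pseudometric space such that every $\bar d$-bounded sequence in $X$ contains a $d^s$-convergent subsequence, and let $f:X\to\mathbb{R}\cup\{\infty\}$ be a proper, bounded below, $d$-lower semicontinuous function. Then for every $x_0\in X$ and $\lambda>0$ there exists $z\in X$ such that (i) $f(z)+\lambda\, d(z,x_0)\le f(x_0)$; (ii) $f(y)=f(z)$ for all $y\in S_\lambda(z)$; (iii) $f(z)<f(x)+\lambda\, d(x,z)$ for all $x\in X\setminus S_\lambda(z)$; (iv) for every sequence $(x_n)$ in $X$, if $f(x_n)+\lambda\, d(x_n,z)\to f(z)$, then $\lim_{n\to\infty} d(x_n,z)=0$.
   Context: A quasi-pseudometric on $X$ is a map $d:X\times X\to[0,\infty)$ with $d(x,x)=0$ and $d(x,z)\le d(x,y)+d(y,z)$ for all $x,y,z$. The topology $\tau_d$ has neighborhood base at $x$ the balls $\{y: d(x,y)<r\}$, $r>0$; "$d$-lower semicontinuous" means lower semicontinuous for $\tau_d$. Set $\bar d(x,y)=d(y,x)$ and $d^s=\max\{d,\bar d\}$; $x_n\to x$ in $d^s$ iff $d(x,x_n)\to0$ and $d(x_n,x)\to0$. A sequence is $\bar d$-bounded if there are $x\in X$, $r>0$ with $\bar d(x,x_n)\le r$ for all $n$. $f$ is proper if $\operatorname{dom} f=\{x:f(x)<\infty\}\ne\emptyset$. For $\alpha>0$, $S_\alpha(x)=\{y\in X: f(y)+\alpha\, d(y,x)\le f(x)\}$. *)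

theory Defs
  imports "HOL-Analysis.Analysis"
begin

definition quasi_pseudometric :: "('a \<Rightarrow> 'a \<Rightarrow> real) \<Rightarrow> bool" where
  "quasi_pseudometric d \<longleftrightarrow>
     (\<forall>x y. 0 \<le> d x y) \<and> (\<forall>x. d x x = 0) \<and> (\<forall>x y z. d x z \<le> d x y + d y z)"

definition d_open :: "('a \<Rightarrow> 'a \<Rightarrow> real) \<Rightarrow> 'a set \<Rightarrow> bool" where
  "d_open d U \<longleftrightarrow> (\<forall>x\<in>U. \<exists>r>0. {y. d x y < r} \<subseteq> U)"

definition d_lsc :: "('a \<Rightarrow> 'a \<Rightarrow> real) \<Rightarrow> ('a \<Rightarrow> ereal) \<Rightarrow> bool" where
  "d_lsc d f \<longleftrightarrow> (\<forall>x t. t < f x \<longrightarrow> (\<exists>U. d_open d U \<and> x \<in> U \<and> (\<forall>y\<in>U. t < f y)))"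

definition dbar_bounded_seq :: "('a \<Rightarrow> 'a \<Rightarrow> real) \<Rightarrow> (nat \<Rightarrow> 'a) \<Rightarrow> bool" where
  "dbar_bounded_seq d s \<longleftrightarrow> (\<exists>x r. r > 0 \<and> (\<forall>n. d (s n) x \<le> r))"

definition ds_converges :: "('a \<Rightarrow> 'a \<Rightarrow> real) \<Rightarrow> (nat \<Rightarrow> 'a) \<Rightarrow> 'a \<Rightarrow> bool" where
  "ds_converges d s x \<longleftrightarrow> ((\<lambda>n. d x (s n)) \<longlonglongrightarrow> 0) \<and> ((\<lambda>n. d (s n) x) \<longlonglongrightarrow> 0)"

definition S_set :: "('a \<Rightarrow> 'a \<Rightarrow> real) \<Rightarrow> ('a \<Rightarrow> ereal) \<Rightarrow> real \<Rightarrow> 'a \<Rightarrow> 'a set" where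
  "S_set d f \<alpha> x = {y. f y + ereal (\<alpha> * d y x) \<le> f x}"

end

theory Submission
  imports Defs "HOL-Analysis.Analysis"
begin


lemma closure_lemma:
  fixes d :: "'a \<Rightarrow> 'a \<Rightarrow> real" and f :: "'a \<Rightarrow> ereal"
  assumes qpm: "quasi_pseudometric d" and lsc: "d_lsc d f" and lam: "lam > 0"
    and no_minf: "\<And>x. f x \<noteq> -\<infinity>"
    and conv: "ds_converges d t w"
    and ev: "eventually (\<lambda>n. f (t n) + ereal (lam * d (t n) p) \<le> K) sequentially"
  shows "f w + ereal (lam * d w p) \<le> K"
proof (rule ccontr)
  assume "\<not> ?thesis"
  hence K: "K < f w + ereal (lam * d w p)" by simp
  hence "K \<noteq> \<infinity>" by auto
  moreover have "K \<noteq> -\<infinity>"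
  proof
    assume "K = -\<infinity>"
    from ev obtain n where "f (t n) + ereal (lam * d (t n) p) \<le> K"
      using eventually_happens'[OF sequentially_bot] by blast
    with \<open>K = -\<infinity>\<close> no_minf[of "t n"] show False by simp
  qed
  ultimately obtain k where k: "K = ereal k" by (cases K) auto
  have "\<exists>a. ereal a < f w \<and> k < a + lam * d w p"
  proof (cases "f w")
    case (real b)
    with K k have "k < b + lam * d w p" by simp
    define a where "a = (b + k - lam * d w p)/2"
    have "a < b" using \<open>k < b + lam * d w p\<close> unfolding a_def by (simp add: field_simps)
    have "k < a + lam * d w p" using \<open>k < b + lam * d w p\<close> unfolding a_def by (simp add: field_simps)
    then show ?thesis using real \<open>a < b\<close> by auto
  next
    case PInf
    then show ?thesis by (intro exI[of _ "k - lam * d w p + 1"]) auto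
  next
    case MInf
    with no_minf show ?thesis by simp
  qed
  then obtain a where a1: "ereal a < f w" and a2: "k < a + lam * d w p" by blast
  define g where "g = a + lam * d w p - k"
  have g: "g > 0" using a2 g_def by simp
  from lsc a1 obtain U where U: "d_open d U" "w \<in> U" "\<forall>y\<in>U. ereal a < f y"
    unfolding d_lsc_def by blast
  then obtain r where r: "r > 0" "{y. d w y < r} \<subseteq> U" unfolding d_open_def by blast
  have "((\<lambda>n. d w (t n)) \<longlonglongrightarrow> 0)" using conv unfolding ds_converges_def by simp
  moreover have "0 < min r (g / lam)" using g lam r by simp
  ultimately have "eventually (\<lambda>n. d w (t n) < min r (g / lam)) sequentially"
    by (rule order_tendstoD)
  with ev have "eventually (\<lambda>n. f (t n) + ereal (lam * d (t n) p) \<le> K \<and> d w (t n) < min r (g / lam)) sequentially"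
    by (rule eventually_conj)
  then obtain n where n1: "f (t n) + ereal (lam * d (t n) p) \<le> K"
    and n2: "d w (t n) < min r (g / lam)"
    using eventually_happens'[OF sequentially_bot] by blast
  have fa: "ereal a < f (t n)" using n2 r U by auto
  have tri: "d w p \<le> d w (t n) + d (t n) p" using qpm unfolding quasi_pseudometric_def by blast
  have "lam * d w (t n) < g" using n2 lam by (simp add: field_simps)
  moreover have "lam * d w p \<le> lam * d w (t n) + lam * d (t n) p" using tri lam
    by (metis distrib_left mult_left_mono less_imp_le)
  ultimately have "lam * d w p < lam * d (t n) p + g" by linarith
  hence "k < a + lam * d (t n) p" unfolding g_def by simp
  hence "ereal k < f (t n) + ereal (lam * d (t n) p)"
  proof (cases "f (t n)")
    case (real v)
    then show ?thesis using fa \<open>k < a + lam * d (t n) p\<close> by simp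
  next
    case PInf then show ?thesis by simp
  next
    case MInf then show ?thesis using no_minf by simp
  qed
  with n1 k show False by simp
qed



lemma le_inv_Suc_le0:
  fixes x :: real
  assumes "\<And>n. x \<le> 1 / (real n + 1)"
  shows "x \<le> 0"
proof (rule ccontr)
  assume "\<not> x \<le> 0"
  then obtain n where "inverse (real (Suc n)) < x" using reals_Archimedean[of x] by auto
  with assms[of n] show False by (simp add: inverse_eq_divide add.commute)
qed

lemma S_trans:
  fixes d :: "'a \<Rightarrow> 'a \<Rightarrow> real" and f :: "'a \<Rightarrow> ereal"
  assumes qpm: "quasi_pseudometric d" and lam: "lam > 0"
    and y: "y \<in> S_set d f lam x" and w: "w \<in> S_set d f lam y"
  shows "w \<in> S_set d f lam x"
proof -
  have "d w x \<le> d w y + d y x" using qpm unfolding quasi_pseudometric_def by blast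
  hence "lam * d w x \<le> lam * d w y + lam * d y x" using lam
    by (metis distrib_left mult_left_mono less_imp_le)
  hence "ereal (lam * d w x) \<le> ereal (lam * d w y) + ereal (lam * d y x)" by simp
  hence "f w + ereal (lam * d w x) \<le> f w + (ereal (lam * d w y) + ereal (lam * d y x))"
    by (rule add_left_mono)
  also have "\<dots> = (f w + ereal (lam * d w y)) + ereal (lam * d y x)" by (simp add: add.assoc)
  also have "\<dots> \<le> f y + ereal (lam * d y x)" using w unfolding S_set_def by (auto intro: add_right_mono)
  also have "\<dots> \<le> f x" using y unfolding S_set_def by auto
  finally show ?thesis unfolding S_set_def by simp
qed

lemma S_refl:
  assumes qpm: "quasi_pseudometric d" shows "x \<in> S_set d f lam x"
  using qpm unfolding quasi_pseudometric_def S_set_def by simp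

lemma S_le:
  fixes d :: "'a \<Rightarrow> 'a \<Rightarrow> real" and f :: "'a \<Rightarrow> ereal"
  assumes qpm: "quasi_pseudometric d" and lam: "lam > 0"
    and y: "y \<in> S_set d f lam x"
  shows "f y \<le> f x"
proof -
  have "0 \<le> lam * d y x" using qpm lam unfolding quasi_pseudometric_def by simp
  hence "f y \<le> f y + ereal (lam * d y x)"
    by (metis add.right_neutral add_left_mono zero_ereal_def ereal_less_eq(3))
  also have "\<dots> \<le> f x" using y unfolding S_set_def by simp
  finally show ?thesis .
qed

lemma S_step:
  fixes d :: "'a \<Rightarrow> 'a \<Rightarrow> real" and f :: "'a \<Rightarrow> ereal"
  assumes qpm: "quasi_pseudometric d" and c: "\<forall>x. ereal c \<le> f x"
    and fx: "f x < \<infinity>" and e: "e > 0"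
  shows "\<exists>y. y \<in> S_set d f lam x \<and> (\<forall>w\<in>S_set d f lam x. f y \<le> f w + ereal e)"
proof -
  define I where "I = Inf (f ` S_set d f lam x)"
  have "x \<in> S_set d f lam x" by (rule S_refl[OF qpm])
  hence "I \<le> f x" unfolding I_def by (simp add: INF_lower)
  moreover have "ereal c \<le> I" unfolding I_def using c by (simp add: INF_greatest)
  ultimately obtain i where i: "I = ereal i" using fx by (cases I) auto
  have "I < I + ereal e" using i e by simp
  then obtain y where y: "y \<in> S_set d f lam x" "f y < I + ereal e"
    unfolding I_def by (metis INF_less_iff I_def)
  have "\<forall>w\<in>S_set d f lam x. f y \<le> f w + ereal e"
  proof
    fix w assume "w \<in> S_set d f lam x"
    hence "I \<le> f w" unfolding I_def by (simp add: INF_lower)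
    hence "I + ereal e \<le> f w + ereal e" by (rule add_right_mono)
    with y show "f y \<le> f w + ereal e" by simp
  qed
  with y show ?thesis by blast
qed



lemma core:
  fixes d :: "'a \<Rightarrow> 'a \<Rightarrow> real" and f :: "'a \<Rightarrow> ereal"
  assumes qpm: "quasi_pseudometric d"
    and seqcomp: "\<And>s. dbar_bounded_seq d s \<Longrightarrow>
                     \<exists>\<phi> x. strict_mono \<phi> \<and> ds_converges d (s \<circ> \<phi>) x"
    and no_minf: "\<And>x. f x \<noteq> -\<infinity>"
    and c: "\<forall>x. ereal c \<le> f x"
    and lsc: "d_lsc d f"
    and lam: "lam > 0"
    and fx1: "f x1 < \<infinity>"
  shows "\<exists>z. z \<in> S_set d f lam x1 \<and> (\<forall>y\<in>S_set d f lam z. f y = f z \<and> d y z = 0)"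
proof -
  let ?S = "S_set d f lam"
  define nxt where "nxt = (\<lambda>x (n::nat). SOME y. y \<in> ?S x \<and> (\<forall>w\<in>?S x. f y \<le> f w + ereal (1 / (real n + 1))))"
  define xs where "xs = rec_nat x1 (\<lambda>n x. nxt x n)"
  have xs0: "xs 0 = x1" and xsS: "\<And>n. xs (Suc n) = nxt (xs n) n" unfolding xs_def by simp_all
  have nxt: "nxt x n \<in> ?S x \<and> (\<forall>w\<in>?S x. f (nxt x n) \<le> f w + ereal (1 / (real n + 1)))"
    if "f x < \<infinity>" for x n
  proof -
    have "\<exists>y. y \<in> ?S x \<and> (\<forall>w\<in>?S x. f y \<le> f w + ereal (1 / (real n + 1)))"
      by (rule S_step[OF qpm c that]) simp
    then show ?thesis unfolding nxt_def by (rule someI_ex)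
  qed
  have fin: "f (xs n) < \<infinity>" for n
  proof (induction n)
    case 0 then show ?case using xs0 fx1 by simp
  next
    case (Suc n)
    have "f (xs (Suc n)) \<le> f (xs n)" unfolding xsS using nxt[OF Suc] S_le[OF qpm lam] by blast
    with Suc show ?case by (meson le_less_trans)
  qed
  have stepS: "xs (Suc n) \<in> ?S (xs n)" for n unfolding xsS using nxt[OF fin] by blast
  have near: "\<forall>w\<in>?S (xs n). f (xs (Suc n)) \<le> f w + ereal (1 / (real n + 1))" for n
    unfolding xsS using nxt[OF fin] by blast
  have chain: "xs n \<in> ?S (xs m)" if "m \<le> n" for m n
    using that
  proof (induction n rule: dec_induct)
    case base then show ?case by (rule S_refl[OF qpm])
  next
    case (step n) then show ?case using S_trans[OF qpm lam _ stepS] by blast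
  qed
  obtain F1 where F1: "f x1 = ereal F1" using fx1 no_minf[of x1] by (cases "f x1") auto
  have bnd: "d (xs n) x1 \<le> \<bar>(F1 - c) / lam\<bar> + 1" for n
  proof -
    have "xs n \<in> ?S x1" using chain[of 0 n] xs0 by simp
    hence "f (xs n) + ereal (lam * d (xs n) x1) \<le> ereal F1" unfolding S_set_def F1 by simp
    moreover have "ereal c + ereal (lam * d (xs n) x1) \<le> f (xs n) + ereal (lam * d (xs n) x1)"
      using c by (intro add_right_mono) simp
    ultimately have "ereal (c + lam * d (xs n) x1) \<le> ereal F1" by (metis order_trans plus_ereal.simps(1))
    hence "lam * d (xs n) x1 \<le> F1 - c" by simp
    hence "d (xs n) x1 \<le> (F1 - c) / lam" using lam by (simp add: field_simps)
    then show ?thesis by linarith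
  qed
  have "dbar_bounded_seq d xs" unfolding dbar_bounded_seq_def
    by (rule exI[of _ x1], rule exI[of _ "\<bar>(F1 - c) / lam\<bar> + 1"]) (use bnd in \<open>auto intro: add_nonneg_pos\<close>)
  then obtain \<phi> z where phi: "strict_mono \<phi>" and conv: "ds_converges d (xs \<circ> \<phi>) z"
    using seqcomp by blast
  have zS: "z \<in> ?S (xs m)" for m
  proof -
    have "eventually (\<lambda>n. f ((xs \<circ> \<phi>) n) + ereal (lam * d ((xs \<circ> \<phi>) n) (xs m)) \<le> f (xs m)) sequentially"
    proof (rule eventually_sequentiallyI[of m])
      fix n assume "m \<le> n"
      hence "m \<le> \<phi> n" using seq_suble[OF phi, of n] by linarith
      then show "f ((xs \<circ> \<phi>) n) + ereal (lam * d ((xs \<circ> \<phi>) n) (xs m)) \<le> f (xs m)"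
        using chain unfolding S_set_def by simp
    qed
    from closure_lemma[OF qpm lsc lam no_minf conv this] show ?thesis unfolding S_set_def by simp
  qed
  have "\<forall>y\<in>?S z. f y = f z \<and> d y z = 0"
  proof
    fix y assume y: "y \<in> ?S z"
    have fz: "f z \<le> f x1" using S_le[OF qpm lam zS[of 0]] xs0 by simp
    have fyz: "f y \<le> f z" using S_le[OF qpm lam y] .
    obtain Z where Z: "f z = ereal Z" using fz fx1 no_minf[of z] by (cases "f z") auto
    obtain Y where Y: "f y = ereal Y" using fyz Z no_minf[of y] by (cases "f y") auto
    have yz: "Y + lam * d y z \<le> Z" using y Y Z unfolding S_set_def by simp
    have up: "Z \<le> Y + 1 / (real n + 1)" for n
    proof -
      have "y \<in> ?S (xs n)" using S_trans[OF qpm lam zS y] .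
      hence "f (xs (Suc n)) \<le> f y + ereal (1 / (real n + 1))" using near by blast
      moreover have "f z \<le> f (xs (Suc n))" using S_le[OF qpm lam zS[of "Suc n"]] .
      ultimately have "ereal Z \<le> ereal (Y + 1 / (real n + 1))" using Y Z by (metis order_trans plus_ereal.simps(1))
      then show ?thesis by simp
    qed
    have "lam * d y z \<le> 0" using le_inv_Suc_le0[of "lam * d y z"] yz up by (smt (verit))
    moreover have "0 \<le> d y z" using qpm unfolding quasi_pseudometric_def by simp
    ultimately have d0: "d y z = 0" using lam by (simp add: mult_le_0_iff)
    have "Z - Y \<le> 0" using le_inv_Suc_le0[of "Z - Y"] up by (smt (verit))
    hence "Y = Z" using yz d0 by simp
    with d0 show "f y = f z \<and> d y z = 0" using Y Z by simp
  qed
  moreover have "z \<in> ?S x1" using zS[of 0] xs0 by simp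
  ultimately show ?thesis by blast
qed



lemma part_iv:
  fixes d :: "'a \<Rightarrow> 'a \<Rightarrow> real" and f :: "'a \<Rightarrow> ereal"
  assumes qpm: "quasi_pseudometric d"
    and seqcomp: "\<And>s. dbar_bounded_seq d s \<Longrightarrow>
                     \<exists>\<phi> x. strict_mono \<phi> \<and> ds_converges d (s \<circ> \<phi>) x"
    and no_minf: "\<And>x. f x \<noteq> -\<infinity>"
    and c: "\<forall>x. ereal c \<le> f x"
    and lsc: "d_lsc d f"
    and lam: "lam > 0"
    and Z: "f z = ereal Z"
    and H: "\<forall>y\<in>S_set d f lam z. f y = f z \<and> d y z = 0"
    and conv: "(\<lambda>n. f (w n) + ereal (lam * d (w n) z)) \<longlonglongrightarrow> f z"
  shows "(\<lambda>n. d (w n) z) \<longlonglongrightarrow> 0"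
proof (rule ccontr)
  assume nc: "\<not> ?thesis"
  have dnn: "0 \<le> d x y" for x y using qpm unfolding quasi_pseudometric_def by simp
  from nc obtain r where r: "r > 0" and fr: "\<forall>no. \<exists>n\<ge>no. \<not> dist (d (w n) z) 0 < r"
    unfolding LIMSEQ_def by blast
  have fr2: "\<forall>no. \<exists>n\<ge>no. r \<le> d (w n) z" using fr dnn by (simp add: not_less)
  have "f z < ereal (Z + 1)" using Z by simp
  from order_tendstoD(2)[OF conv this] obtain N0 where
    N0: "\<forall>n\<ge>N0. f (w n) + ereal (lam * d (w n) z) < ereal (Z + 1)"
    unfolding eventually_sequentially by blast
  define A where "A = {n. r \<le> d (w n) z \<and> f (w n) + ereal (lam * d (w n) z) < ereal (Z + 1)}"
  have "infinite A" unfolding infinite_nat_iff_unbounded_le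
  proof
    fix m
    obtain n where "n \<ge> max m N0" "r \<le> d (w n) z" using fr2 by blast
    then show "\<exists>n\<ge>m. n \<in> A" unfolding A_def using N0 by auto
  qed
  from infinite_enumerate[OF this] obtain \<psi> :: "nat \<Rightarrow> nat" where psi0: "strict_mono \<psi> \<and> (\<forall>n. \<psi> n \<in> A)"
    by (elim exE) 
  have psi: "strict_mono \<psi>" and psiA: "\<forall>n. \<psi> n \<in> A" using psi0 by simp_all
  define s where "s = w \<circ> \<psi>"
  have bnd: "d (s n) z \<le> \<bar>(Z + 1 - c) / lam\<bar> + 1" for n
  proof -
    have lt: "f (s n) + ereal (lam * d (s n) z) < ereal (Z + 1)" using psiA unfolding A_def s_def by auto
    have "ereal c + ereal (lam * d (s n) z) \<le> f (s n) + ereal (lam * d (s n) z)"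
      using c by (intro add_right_mono) simp
    with lt have "ereal (c + lam * d (s n) z) \<le> ereal (Z + 1)" by (metis less_imp_le order_trans plus_ereal.simps(1))
    hence "lam * d (s n) z \<le> Z + 1 - c" by simp
    hence "d (s n) z \<le> (Z + 1 - c) / lam" using lam by (simp add: field_simps)
    then show ?thesis by linarith
  qed
  have "dbar_bounded_seq d s" unfolding dbar_bounded_seq_def
    by (rule exI[of _ z], rule exI[of _ "\<bar>(Z + 1 - c) / lam\<bar> + 1"]) (use bnd in \<open>auto intro: add_nonneg_pos\<close>)
  then obtain \<phi> w0 where phi: "strict_mono \<phi>" and cw: "ds_converges d (s \<circ> \<phi>) w0"
    using seqcomp by blast
  have conv2: "(\<lambda>n. f ((s \<circ> \<phi>) n) + ereal (lam * d ((s \<circ> \<phi>) n) z)) \<longlonglongrightarrow> f z"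
    using LIMSEQ_subseq_LIMSEQ[OF conv strict_mono_o[OF psi phi]] unfolding s_def by (simp add: comp_def)
  have eps: "f w0 + ereal (lam * d w0 z) \<le> ereal (Z + 1 / (real n + 1))" for n
  proof -
    have "f z < ereal (Z + 1 / (real n + 1))" using Z by simp
    from order_tendstoD(2)[OF conv2 this]
    have "eventually (\<lambda>k. f ((s \<circ> \<phi>) k) + ereal (lam * d ((s \<circ> \<phi>) k) z) \<le> ereal (Z + 1 / (real n + 1))) sequentially"
      by (rule eventually_mono) simp
    from closure_lemma[OF qpm lsc lam no_minf cw this] show ?thesis .
  qed
  obtain W where W: "f w0 = ereal W"
  proof (cases "f w0")
    case (real x) then show ?thesis using that by simp
  next
    case PInf then show ?thesis using eps[of 0] by simp
  next
    case MInf then show ?thesis using no_minf by simp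
  qed
  have "W + lam * d w0 z - Z \<le> 1 / (real n + 1)" for n using eps[of n] W by simp
  hence "W + lam * d w0 z - Z \<le> 0" by (rule le_inv_Suc_le0)
  hence "w0 \<in> S_set d f lam z" unfolding S_set_def using W Z by simp
  hence d0: "d w0 z = 0" using H by blast
  have "((\<lambda>n. d ((s \<circ> \<phi>) n) w0) \<longlonglongrightarrow> 0)" using cw unfolding ds_converges_def by simp
  from order_tendstoD(2)[OF this r] obtain n where n: "d ((s \<circ> \<phi>) n) w0 < r"
    using eventually_happens'[OF sequentially_bot] by blast
  have "d ((s \<circ> \<phi>) n) z \<le> d ((s \<circ> \<phi>) n) w0 + d w0 z" using qpm unfolding quasi_pseudometric_def by blast
  with d0 n have "d ((s \<circ> \<phi>) n) z < r" by simp
  moreover have "r \<le> d ((s \<circ> \<phi>) n) z" using psiA unfolding A_def s_def by auto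
  ultimately show False by simp
qed


theorem mainTheorem3:
  fixes d :: "'a \<Rightarrow> 'a \<Rightarrow> real" and f :: "'a \<Rightarrow> ereal"
    and x0 :: 'a and lam :: real
  assumes qpm: "quasi_pseudometric d"
    and seqcomp: "\<And>s. dbar_bounded_seq d s \<Longrightarrow>
                     \<exists>\<phi> x. strict_mono \<phi> \<and> ds_converges d (s \<circ> \<phi>) x"
    and no_minf: "\<And>x. f x \<noteq> -\<infinity>"
    and proper: "\<exists>x. f x < \<infinity>"
    and bdd_below: "\<exists>c::real. \<forall>x. ereal c \<le> f x"
    and lsc: "d_lsc d f"
    and lam: "lam > 0"
  shows "\<exists>z. f z + ereal (lam * d z x0) \<le> f x0
           \<and> (\<forall>y\<in>S_set d f lam z. f y = f z)
           \<and> (\<forall>x. x \<notin> S_set d f lam z \<longrightarrow> f z < f x + ereal (lam * d x z))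
           \<and> (\<forall>xs::nat \<Rightarrow> 'a. ((\<lambda>n. f (xs n) + ereal (lam * d (xs n) z)) \<longlonglongrightarrow> f z)
                  \<longrightarrow> ((\<lambda>n. d (xs n) z) \<longlonglongrightarrow> 0))"
proof -
  obtain c where c: "\<forall>x. ereal c \<le> f x" using bdd_below by blast
  obtain x1 where x1: "f x1 < \<infinity>" and x1i: "f x0 < \<infinity> \<Longrightarrow> x1 = x0"
  proof (cases "f x0 < \<infinity>")
    case True then show ?thesis using that by blast
  next
    case False
    from proper obtain x where "f x < \<infinity>" by blast
    then show ?thesis using that False by blast
  qed
  from core[OF qpm seqcomp no_minf c lsc lam x1] obtain z where
    zS: "z \<in> S_set d f lam x1" and H: "\<forall>y\<in>S_set d f lam z. f y = f z \<and> d y z = 0" by blast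
  have fz: "f z \<le> f x1" using S_le[OF qpm lam zS] .
  obtain Z where Z: "f z = ereal Z" using fz x1 no_minf[of z] by (cases "f z") auto
  have i: "f z + ereal (lam * d z x0) \<le> f x0"
  proof (cases "f x0 < \<infinity>")
    case True then show ?thesis using x1i zS unfolding S_set_def by simp
  next
    case False then show ?thesis by simp
  qed
  have iii: "\<forall>x. x \<notin> S_set d f lam z \<longrightarrow> f z < f x + ereal (lam * d x z)"
    unfolding S_set_def by (simp add: not_le)
  have iv: "\<forall>xs::nat \<Rightarrow> 'a. ((\<lambda>n. f (xs n) + ereal (lam * d (xs n) z)) \<longlonglongrightarrow> f z)
                  \<longrightarrow> ((\<lambda>n. d (xs n) z) \<longlonglongrightarrow> 0)"
    using part_iv[OF qpm seqcomp no_minf c lsc lam Z H] by blast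
  show ?thesis using i H iii iv by blast
qed

end
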